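(* Let $n$, $k$, $t$ be positive integers with $t\geq 2$, $k\geq t+2$ and $n\geq 2k+t+\delta_{2,q}$, and set $$h(n,k,t)={n-t\brack k-t}-q^{(k-t+1)(k-t)}{n-k-1\brack k-t}+2.$$ Then $h(n,k,t)>\frac{47}{48}{k-t+1\brack 1}{n-t-1\brack k-t-1}$.
   Context: $q$ is a prime power and ${m\brack r}$ denotes the Gaussian binomial coefficient $\prod_{i=0}^{r-1}\frac{q^{m-i}-1}{q^{r-i}-1}$ (equal to $1$ for $r=0$). $\delta_{a,b}$ is the Kronecker delta. (The quantity $h(n,k,t)$ equals the size of the family $\{F\in{V\brack k}: E\subseteq F,\ \dim(F\cap U_2)\geq t\}\cup\{U_1,U_2\}$ for $U_1,U_2\in{V\brack k}$, $E\in{U_1\brack t}$ with $U_1\cap U_2\in{E\brack t-1}$, where $\dim V=n$.) *)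

theory Defs
  imports Complex_Main "HOL-Computational_Algebra.Primes"
begin

definition prime_power :: "nat \<Rightarrow> bool" where
  "prime_power q \<longleftrightarrow> (\<exists>p e. prime p \<and> e > 0 \<and> q = p ^ e)"

definition gauss_binom :: "nat \<Rightarrow> nat \<Rightarrow> nat \<Rightarrow> real" where
  "gauss_binom q m r = (\<Prod>i<r. (real q ^ (m - i) - 1) / (real q ^ (r - i) - 1))"

definition kdelta :: "nat \<Rightarrow> nat \<Rightarrow> nat" where
  "kdelta a b = (if a = b then 1 else 0)"

definition h_fun :: "nat \<Rightarrow> nat \<Rightarrow> nat \<Rightarrow> nat \<Rightarrow> real" where
  "h_fun q n k t = gauss_binom q (n - t) (k - t)
     - real q ^ ((k - t + 1) * (k - t)) * gauss_binom q (n - k - 1) (k - t) + 2"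

end

theory Submission
  imports Defs
begin

lemma gb_pos:
  fixes q a r :: nat
  assumes "q \<ge> 2" "r \<le> a"
  shows "gauss_binom q a r > 0"
  unfolding gauss_binom_def
proof (intro prod_pos ballI)
  fix i assume "i \<in> {..<r}"
  then have "0 < a - i" "0 < r - i" using assms by auto
  moreover have "real q > 1" using assms by simp
  ultimately show "0 < (real q ^ (a - i) - 1) / (real q ^ (r - i) - 1)"
    by (simp add: one_less_power)
qed

lemma pascal:
  fixes q b m :: nat
  assumes "q \<ge> 2" "m < b"
  shows "gauss_binom q (Suc b) (Suc m) = real q ^ Suc m * gauss_binom q b (Suc m) + gauss_binom q b m"
proof -
  define x where "x = real q"
  define P where "P = (\<Prod>i<m. x^(b-i) - 1)"
  define D where "D = (\<Prod>i<m. x^(m-i) - 1)"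
  have x1: "x > 1" using assms by (simp add: x_def)
  have Dpos: "D > 0" unfolding D_def
    by (intro prod_pos ballI) (use x1 in \<open>auto intro!: one_less_power\<close>)
  have g1: "gauss_binom q (Suc b) (Suc m) = (x^(Suc b) - 1) * P / ((x^(Suc m) - 1) * D)"
    unfolding gauss_binom_def P_def D_def x_def prod_dividef
    by (simp only: prod.lessThan_Suc_shift) simp
  have dS: "(\<Prod>i<Suc m. x^(Suc m - i) - 1) = (x^Suc m - 1) * D"
    by (simp only: prod.lessThan_Suc_shift) (simp add: D_def)
  have nS: "(\<Prod>i<Suc m. x^(b - i) - 1) = P * (x^(b-m) - 1)"
    by (simp add: P_def)
  have g2: "gauss_binom q b (Suc m) = P * (x^(b-m) - 1) / ((x^(Suc m) - 1) * D)"
    unfolding gauss_binom_def x_def[symmetric] prod_dividef dS nS by simp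
  have g3: "gauss_binom q b m = P / D"
    unfolding gauss_binom_def P_def D_def x_def prod_dividef by simp
  have e: "x^m * x^(b-m) = x^b"
    using assms by (simp add: power_add[symmetric])
  have nz: "x^(Suc m) - 1 \<noteq> 0" using x1
    by (metis less_numeral_extra(4) one_less_power right_minus_eq zero_less_Suc)
  show ?thesis unfolding g1 g2 g3 x_def[symmetric]
    using Dpos nz e by (simp add: field_simps)
qed

lemma bern:
  fixes y :: "nat \<Rightarrow> real"
  assumes "\<And>i. i < r \<Longrightarrow> 0 \<le> y i \<and> y i \<le> 1"
  shows "1 - (\<Sum>i<r. y i) \<le> (\<Prod>i<r. 1 - y i)"
  using assms
proof (induction r)
  case 0
  then show ?case by simp
next
  case (Suc r)
  have ih: "1 - (\<Sum>i<r. y i) \<le> (\<Prod>i<r. 1 - y i)" using Suc by auto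
  have yr: "0 \<le> y r" "y r \<le> 1" using Suc.prems[of r] by auto
  have s0: "0 \<le> (\<Sum>i<r. y i)" using Suc.prems by (intro sum_nonneg) auto
  have "(1 - (\<Sum>i<r. y i)) * (1 - y r) \<le> (\<Prod>i<r. 1 - y i) * (1 - y r)"
    using ih yr by (intro mult_right_mono) auto
  moreover have "1 - (\<Sum>i<Suc r. y i) \<le> (1 - (\<Sum>i<r. y i)) * (1 - y r)"
    using s0 yr by (simp add: algebra_simps)
  ultimately show ?case by simp
qed

lemma invsum:
  fixes x :: real and N r :: nat
  assumes "x \<ge> 2" "r < N"
  shows "(\<Sum>i<r. 1 / (x^(N-1-i) - 1)) \<le> x / ((x - 1) * (x^(N-r) - 1))"
  using assms(2)
proof (induction r)
  case 0
  have "x^N \<ge> 1" using assms by simp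
  then show ?case using assms by simp
next
  case (Suc r)
  define Z where "Z = x^(N - Suc r)"
  have Zx: "Z \<ge> x" unfolding Z_def using Suc.prems assms
    using power_increasing[of 1 "N - Suc r" x] by simp
  have xZ: "x^(N-r) = x * Z" unfolding Z_def using Suc.prems
    by (simp add: Suc_diff_Suc[symmetric])
  have ih: "(\<Sum>i<r. 1 / (x^(N-1-i) - 1)) \<le> x / ((x - 1) * (x * Z - 1))"
    using Suc by (simp add: xZ)
  have last: "x^(N-1-r) = Z" unfolding Z_def by simp
  have key: "x / ((x - 1) * (x * Z - 1)) + 1 / (Z - 1) \<le> x / ((x - 1) * (Z - 1))"
  proof -
    have p1: "x - 1 > 0" "Z - 1 > 0" "x * Z - 1 > 0" using assms Zx
      by (auto, smt (verit) mult_le_cancel_left1)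
    have "x * (Z - 1) \<le> x * Z - 1" using assms by (simp add: algebra_simps)
    then have "x / ((x - 1) * (x * Z - 1)) \<le> 1 / ((x - 1) * (Z - 1))"
      using p1 by (simp add: divide_simps)
    moreover have "1 / ((x - 1) * (Z - 1)) + 1 / (Z - 1) = x / ((x - 1) * (Z - 1))"
      using p1 by (simp add: divide_simps)
    ultimately show ?thesis by linarith
  qed
  have "(\<Sum>i<Suc r. 1 / (x^(N-1-i) - 1)) = (\<Sum>i<r. 1 / (x^(N-1-i) - 1)) + 1 / (Z - 1)"
    using last by simp
  also have "\<dots> \<le> x / ((x - 1) * (Z - 1))" using ih key by linarith
  finally show ?case unfolding Z_def by simp
qed

lemma fac_alg:
  fixes W A B D :: real
  assumes "W * B = A" "A \<noteq> 1"
  shows "W * ((B - 1) / D) = ((A - 1) / D) * (1 - (W - 1) * (1 / (A - 1)))"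
proof -
  have "A - 1 \<noteq> 0" using assms by simp
  then have "1 - (W - 1) * (1 / (A - 1)) = (A - W) / (A - 1)" by (simp add: field_simps)
  then have "((A - 1) / D) * (1 - (W - 1) * (1 / (A - 1))) = (A - W) / D"
    using \<open>A - 1 \<noteq> 0\<close> by simp
  moreover have "W * ((B - 1) / D) = (A - W) / D" using assms(1)
    by (simp add: algebra_simps diff_divide_distrib)
  ultimately show ?thesis by linarith
qed

lemma term_bound:
  fixes q N r w :: nat
  assumes "q \<ge> 2" "w \<le> Suc r" "2 * Suc r + 4 \<le> N"
  shows "real q ^ w * gauss_binom q (N-1) r * (1 - (real q ^ w - 1) * (real q / ((real q - 1) * (real q ^ (N-r) - 1))))
     \<le> real q ^ (w * Suc r) * gauss_binom q (N - Suc w) r"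
proof -
  define x where "x = real q"
  define y where "y i = (x^w - 1) * (1 / (x^(N-1-i) - 1))" for i
  define E where "E = x / ((x - 1) * (x ^ (N-r) - 1))"
  define F where "F i = (x^(N-1-i) - 1)/(x^(r-i)-1)" for i
  have x2: "x \<ge> 2" using assms by (simp add: x_def)
  have fac: "x^w * ((x^(N - Suc w - i) - 1)/(x^(r-i)-1)) = F i * (1 - y i)" if i: "i < r" for i
  proof -
    have a: "x^w * x^(N - Suc w - i) = x^(N-1-i)"
      using i assms by (simp add: power_add[symmetric])
    have b: "x^(N-1-i) > 1" using i assms x2 by (intro one_less_power) auto
    show ?thesis unfolding F_def y_def using b a
      by (intro fac_alg) auto
  qed
  have yb: "0 \<le> y i \<and> y i \<le> 1" if i: "i < r" for i
  proof -
    have b: "x^(N-1-i) > 1" using i assms x2 by (intro one_less_power) auto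
    have c: "x^w \<le> x^(N-1-i)" using i assms x2 by (intro power_increasing) auto
    have d: "x^w \<ge> 1" using x2 by simp
    show ?thesis unfolding y_def using b c d by (simp add: divide_simps)
  qed
  have "x^(w*Suc r) * gauss_binom q (N - Suc w) r
      = x^w * (\<Prod>i<r. x^w * ((x^(N - Suc w - i) - 1)/(x^(r-i)-1)))"
  proof -
    have p: "x^(w*Suc r) = x^w * (x^w)^r" by (simp add: power_add power_mult)
    show ?thesis
      unfolding gauss_binom_def x_def[symmetric] prod.distrib p by simp
  qed
  also have "\<dots> = x^w * (\<Prod>i<r. F i * (1 - y i))"
    using fac by simp
  also have "\<dots> = x^w * gauss_binom q (N-1) r * (\<Prod>i<r. 1 - y i)"
    unfolding prod.distrib gauss_binom_def F_def x_def by simp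
  finally have eq: "x^(w*Suc r) * gauss_binom q (N - Suc w) r = x^w * gauss_binom q (N-1) r * (\<Prod>i<r. 1 - y i)" .
  have "(\<Sum>i<r. y i) = (x^w - 1) * (\<Sum>i<r. 1 / (x^(N-1-i) - 1))"
    unfolding y_def sum_distrib_left ..
  also have "\<dots> \<le> (x^w - 1) * E"
    unfolding E_def using x2 assms by (intro mult_left_mono invsum) auto
  finally have sy: "(\<Sum>i<r. y i) \<le> (x^w - 1) * E" .
  have "1 - (x^w - 1) * E \<le> (\<Prod>i<r. 1 - y i)"
    using bern[of r y] yb sy by fastforce
  moreover have "0 \<le> x^w * gauss_binom q (N-1) r"
  proof -
    have "r \<le> N - 1" using assms by simp
    then have "gauss_binom q (N-1) r > 0" using gb_pos[of q r "N-1"] assms by simp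
    then show ?thesis using x2 by simp
  qed
  ultimately have "x^w * gauss_binom q (N-1) r * (1 - (x^w - 1) * E) \<le> x^w * gauss_binom q (N-1) r * (\<Prod>i<r. 1 - y i)"
    by (intro mult_left_mono)
  then show ?thesis using eq unfolding E_def x_def by simp
qed

lemma key_ineq:
  fixes x X Y :: real
  assumes "x \<ge> 2" "X \<ge> x^3" "(x = 2 \<and> Y \<ge> 32 * X) \<or> (x \<ge> 3 \<and> Y \<ge> x^4 * X)"
  shows "48 * x * (X - x) \<le> (Y - 1) * (x^2 - 1)"
  using assms(3)
proof
  assume a: "x = 2 \<and> Y \<ge> 32 * X"
  then show ?thesis by simp
next
  assume a: "x \<ge> 3 \<and> Y \<ge> x^4 * X"
  have x3: "x^3 \<ge> 27" using a power_mono[of 3 x 3] by simp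
  have x21: "x^2 - 1 \<ge> 8" using a power_mono[of 3 x 2] by simp
  have X1: "X \<ge> x" using assms(1,2) x3
    by (smt (verit) power3_eq_cube mult_le_cancel_left1 mult_nonneg_nonneg)
  have Xp: "X > 0" using X1 assms by simp
  have "x^4 * X = x * X * x^3" by (simp add: power_numeral_reduce)
  also have "\<dots> \<ge> x * X * 27" using x3 Xp assms by (intro mult_left_mono) auto
  finally have h1: "x^4 * X \<ge> 27 * x * X" by simp
  have xx: "x * X \<ge> x * x" using X1 assms by (intro mult_left_mono) auto
  have x4: "x * x \<ge> 2 * 2" using assms by (intro mult_mono) auto
  have "(x^4 * X - 1) * (x^2 - 1) \<ge> (27 * x * X - 1) * 8"
    using h1 x21 xx x4 by (intro mult_mono) auto
  moreover have "(Y - 1) * (x^2 - 1) \<ge> (x^4 * X - 1) * (x^2 - 1)"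
    using a x21 by (intro mult_right_mono) auto
  moreover have "x * X \<ge> x * x" using X1 assms by (intro mult_left_mono) auto
  moreover have "x^2 = x * x" by (simp add: power2_eq_square)
  ultimately show ?thesis using x4 by (auto simp: algebra_simps)
qed

lemma main_ineq:
  fixes q N r :: nat
  assumes q2: "q \<ge> 2" and r1: "r \<ge> 1" and N: "2 * Suc r + 4 \<le> N"
    and N2: "q = 2 \<Longrightarrow> 2 * Suc r + 5 \<le> N"
  shows "(47/48) * gauss_binom q (Suc (Suc r)) 1 * gauss_binom q (N-1) r
     \<le> gauss_binom q N (Suc r) - real q ^ (Suc (Suc r) * Suc r) * gauss_binom q (N - Suc (Suc r)) (Suc r)"
proof -
  define x where "x = real q"
  have x2: "x \<ge> 2" using q2 by (simp add: x_def)
  define Bf where "Bf w = x^(w * Suc r) * gauss_binom q (N - w) (Suc r)" for w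
  define G' where "G' = gauss_binom q (N-1) r"
  define E where "E = x / ((x - 1) * (x ^ (N-r) - 1))"
  define X where "X = x ^ Suc (Suc r)"
  define Y where "Y = x ^ (N - r)"
  define S where "S = (\<Sum>w<Suc (Suc r). x^w)"
  define T where "T = (\<Sum>w<Suc (Suc r). x^w * (x^w - 1))"
  have G'pos: "G' > 0" unfolding G'_def using gb_pos[of q r "N-1"] q2 N by simp
  have step: "Bf w - Bf (Suc w) = x^(w*Suc r) * gauss_binom q (N - Suc w) r" if w: "w \<le> Suc r" for w
  proof -
    have nw: "N - w = Suc (N - Suc w)" using w N by simp
    have p: "gauss_binom q (N - w) (Suc r) = x ^ Suc r * gauss_binom q (N - Suc w) (Suc r) + gauss_binom q (N - Suc w) r"
      unfolding nw x_def using pascal[of q r "N - Suc w"] q2 w N by simp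
    have e: "x^(Suc w * Suc r) = x^(w * Suc r) * x ^ Suc r" by (simp add: power_add)
    show ?thesis unfolding Bf_def p e by (simp add: algebra_simps)
  qed
  have "gauss_binom q N (Suc r) - x^(Suc (Suc r) * Suc r) * gauss_binom q (N - Suc (Suc r)) (Suc r)
      = Bf 0 - Bf (Suc (Suc r))" unfolding Bf_def by simp
  also have "\<dots> = (\<Sum>w<Suc (Suc r). Bf w - Bf (Suc w))"
    by (rule sum_lessThan_telescope'[symmetric])
  also have "\<dots> = (\<Sum>w<Suc (Suc r). x^(w*Suc r) * gauss_binom q (N - Suc w) r)"
    using step by (intro sum.cong) auto
  also have "\<dots> \<ge> (\<Sum>w<Suc (Suc r). x^w * G' * (1 - (x^w - 1) * E))"
    unfolding G'_def E_def x_def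
    using term_bound[of q _ r N] q2 N by (intro sum_mono) auto
  finally have lb: "(\<Sum>w<Suc (Suc r). x^w * G' * (1 - (x^w - 1) * E)) \<le>
     gauss_binom q N (Suc r) - x^(Suc (Suc r) * Suc r) * gauss_binom q (N - Suc (Suc r)) (Suc r)" .
  have sumeq: "(\<Sum>w<Suc (Suc r). x^w * G' * (1 - (x^w - 1) * E)) = G' * (S - E * T)"
  proof -
    have "(\<Sum>w<Suc (Suc r). x^w * G' * (1 - (x^w - 1) * E))
        = (\<Sum>w<Suc (Suc r). G' * x^w - G' * E * (x^w * (x^w - 1)))"
      by (intro sum.cong) (simp_all add: algebra_simps)
    also have "\<dots> = G' * S - G' * E * T"
      unfolding S_def T_def by (simp only: sum_subtractf sum_distrib_left)
    finally show ?thesis by (simp add: algebra_simps)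
  qed
  have x1: "x - 1 > 0" using x2 by simp
  have Sf: "S = (X - 1) / (x - 1)" unfolding S_def X_def using x2
    by (intro geometric_sum) auto
  have Tf: "T = (X - 1) * (X - x) / (x^2 - 1)"
  proof -
    have "T = (\<Sum>w<Suc (Suc r). (x^2)^w) - S" unfolding T_def S_def
      by (simp add: algebra_simps sum_subtractf power_mult[symmetric] power2_eq_square power_mult_distrib)
    also have "(\<Sum>w<Suc (Suc r). (x^2)^w) = ((x^2)^Suc (Suc r) - 1) / (x^2 - 1)"
      using x2 by (intro geometric_sum) (simp add: power2_eq_square, smt (verit) mult_le_cancel_left1)
    also have "(x^2)^Suc (Suc r) = X * X" unfolding X_def by (simp add: power_mult_distrib power2_eq_square)
    finally have "T = (X * X - 1) / (x^2 - 1) - (X - 1) / (x - 1)" using Sf by simp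
    moreover have "x^2 - 1 = (x - 1) * (x + 1)" by (simp add: algebra_simps power2_eq_square)
    ultimately show ?thesis using x1 x2 by (simp add: divide_simps) (simp add: algebra_simps)
  qed
  have X3: "X \<ge> x^3" unfolding X_def using r1 x2 by (intro power_increasing) auto
  have Ycase: "(x = 2 \<and> Y \<ge> 32 * X) \<or> (x \<ge> 3 \<and> Y \<ge> x^4 * X)"
  proof (cases "q = 2")
    case True
    then have "N - r \<ge> Suc (Suc r) + 5" using N2 by simp
    then have "x ^ (N - r) \<ge> x ^ (Suc (Suc r) + 5)" using x2 by (intro power_increasing) auto
    then show ?thesis using True unfolding X_def Y_def x_def by (simp add: power_add)
  next
    case False
    then have "x \<ge> 3" using q2 unfolding x_def by simp
    moreover have "N - r \<ge> Suc (Suc r) + 4" using N by simp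
    then have pw: "x ^ (N - r) \<ge> x ^ (Suc (Suc r) + 4)" using x2 by (intro power_increasing) auto
    have e4: "x ^ (Suc (Suc r) + 4) = x^4 * X" unfolding X_def by (simp only: power_add mult.commute)
    have "x^4 * X \<le> Y" using pw unfolding e4 Y_def .
    ultimately show ?thesis by simp
  qed
  have key: "48 * x * (X - x) \<le> (Y - 1) * (x^2 - 1)" using key_ineq[OF x2 X3 Ycase] .
  have "1 \<le> X" unfolding X_def using x2 by (intro one_le_power) auto
  then have X1: "X - 1 \<ge> 0" by simp
  have Y1: "Y - 1 > 0" unfolding Y_def using x2 N by (simp add: one_less_power)
  have x21: "x^2 - 1 > 0" using x2 by (simp add: power2_eq_square, smt (verit) mult_le_cancel_left1)
  have "x * (X - x) / ((Y - 1) * (x^2 - 1)) \<le> 1 / 48"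
    using key Y1 x21 by (simp add: divide_simps)
  then have "((X - 1) / (x - 1)) * (x * (X - x) / ((Y - 1) * (x^2 - 1))) \<le> ((X - 1) / (x - 1)) * (1 / 48)"
    using X1 x1 by (intro mult_left_mono) auto
  moreover have "E * T = ((X - 1) / (x - 1)) * (x * (X - x) / ((Y - 1) * (x^2 - 1)))"
    unfolding E_def Tf Y_def by (simp add: field_simps)
  ultimately have ET: "E * T \<le> S / 48" unfolding Sf by simp
  have "G' * (E * T) \<le> G' * (S / 48)" using ET G'pos by (intro mult_left_mono) auto
  then have "(47/48) * S * G' \<le> G' * (S - E * T)"
    by (simp add: algebra_simps)
  moreover have "gauss_binom q (Suc (Suc r)) 1 = S" unfolding Sf gauss_binom_def X_def x_def by simp
  ultimately show ?thesis using lb sumeq unfolding G'_def x_def by simp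
qed

theorem lemma2p6:
  fixes q n k t :: nat
  assumes "prime_power q"
    and "t \<ge> 2" and "k \<ge> t + 2"
    and "n \<ge> 2 * k + t + kdelta 2 q"
  shows "h_fun q n k t > (47 / 48) * gauss_binom q (k - t + 1) 1 * gauss_binom q (n - t - 1) (k - t - 1)"
proof -
  obtain p e where pe: "prime p" "e > 0" "q = p ^ e" using assms(1) unfolding prime_power_def by blast
  have p2: "p \<ge> 2" using pe(1) by (simp add: prime_ge_2_nat)
  have "p ^ 1 \<le> p ^ e" using pe p2 by (intro power_increasing) auto
  then have q2: "q \<ge> 2" using pe p2 by simp
  define r where "r = k - t - 1"
  define N where "N = n - t"
  have kt: "k - t = Suc r" "k - t + 1 = Suc (Suc r)" using assms unfolding r_def by auto
  have nk: "n - k - 1 = N - Suc (Suc r)" "n - t - 1 = N - 1" using assms unfolding r_def N_def by auto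
  have r1: "r \<ge> 1" using assms unfolding r_def by simp
  have N1: "2 * Suc r + 4 \<le> N" using assms unfolding r_def N_def kdelta_def by auto
  have N2: "2 * Suc r + 5 \<le> N" if "q = 2" using assms that unfolding r_def N_def kdelta_def by auto
  have m: "(47/48) * gauss_binom q (Suc (Suc r)) 1 * gauss_binom q (N-1) r
     \<le> gauss_binom q N (Suc r) - real q ^ (Suc (Suc r) * Suc r) * gauss_binom q (N - Suc (Suc r)) (Suc r)"
    using main_ineq[OF q2 r1 N1 N2] by blast
  have h: "h_fun q n k t = gauss_binom q N (Suc r) - real q ^ (Suc (Suc r) * Suc r) * gauss_binom q (N - Suc (Suc r)) (Suc r) + 2"
    unfolding h_fun_def N_def[symmetric] kt nk by simp
  show ?thesis unfolding h kt nk using m by simp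
qed

end
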